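(* For every $\varepsilon\ge\delta>0$ there is a randomized two-party communication protocol which, given a perfect marriage $\mu$ between $W$ and $M$ ($|W|=|M|=n$) known to both parties, with Alice holding the women's full preference profile and Bob holding the men's full preference profile, determines whether $\mu$ induces at least $\varepsilon n^2$ blocking pairs or at most $(\varepsilon-\delta)n^2$ blocking pairs (promised that one of these holds), using $O(\log n)$ bits of communication. In particular, such a protocol determines whether $\mu$ is stable or has at least $\varepsilon n^2$ blocking pairs using $O(\log n)$ communication.
   Context: A full preference profile of the women gives each woman a total order on $M$; that of the men gives each man a total order on $W$. A perfect marriage is a bijection between $W$ and $M$. A pair $(w,m)$ is blocking for $\mu$ if $w$ prefers $m$ to her spouse in $\mu$ and $m$ prefers $w$ to his spouse in $\mu$; $\mu$ is stable if it has no blocking pair. A randomized protocol must answer correctly with probability at least $2/3$ on every input; the constant in $O(\log n)$ may depend on $\varepsilon,\delta$. *)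

theory Defs
  imports "HOL-Probability.Probability_Mass_Function"
begin

text \<open>A deterministic two-party protocol tree: Alice holds an input of type 'a,
Bob one of type 'b.  At an Alice node, Alice sends one bit computed from her
input (and the transcript, implicit in the position in the tree); similarly
for Bob.\<close>

datatype ('a, 'b) ptree =
    Out bool
  | ANode "'a \<Rightarrow> bool" "('a, 'b) ptree" "('a, 'b) ptree"
  | BNode "'b \<Rightarrow> bool" "('a, 'b) ptree" "('a, 'b) ptree"

fun exec :: "('a, 'b) ptree \<Rightarrow> 'a \<Rightarrow> 'b \<Rightarrow> bool" where
  "exec (Out v) x y = v"
| "exec (ANode f l r) x y = (if f x then exec l x y else exec r x y)"
| "exec (BNode g l r) x y = (if g y then exec l x y else exec r x y)"

text \<open>Communication cost = number of bits sent in the worst case = depth.\<close>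
fun depth :: "('a, 'b) ptree \<Rightarrow> nat" where
  "depth (Out v) = 0"
| "depth (ANode f l r) = Suc (max (depth l) (depth r))"
| "depth (BNode g l r) = Suc (max (depth l) (depth r))"

text \<open>A private-coin randomized protocol: a protocol tree in which Alice's
messages depend on her input and her private random string ra (drawn from
the distribution ca), Bob's on his input and his private random string rb
(drawn from cb, independently).  Random strings are encoded as naturals.\<close>

definition accept_prob ::
  "('a \<times> nat, 'b \<times> nat) ptree \<Rightarrow> nat pmf \<Rightarrow> nat pmf \<Rightarrow> 'a \<Rightarrow> 'b \<Rightarrow> real" where
  "accept_prob T ca cb x y =
     measure_pmf.prob (pair_pmf ca cb) {(ra, rb). exec T (x, ra) (y, rb)}"

text \<open>Women and men are both {0..<n}.  A full preference profile of the women
assigns to each woman w a strict total order P w on the men {..<n};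
(m, m') \<in> P w means w prefers m to m'.  Likewise for the men.\<close>

definition pref_profile :: "nat \<Rightarrow> (nat \<Rightarrow> (nat \<times> nat) set) \<Rightarrow> bool" where
  "pref_profile n P \<longleftrightarrow>
     (\<forall>i<n. strict_linear_order_on {..<n} (P i) \<and> P i \<subseteq> {..<n} \<times> {..<n})"

text \<open>A perfect marriage: a bijection from women to men; mu w is w's husband.\<close>
definition perfect_marriage :: "nat \<Rightarrow> (nat \<Rightarrow> nat) \<Rightarrow> bool" where
  "perfect_marriage n \<mu> \<longleftrightarrow> bij_betw \<mu> {..<n} {..<n}"

definition blocking ::
  "nat \<Rightarrow> (nat \<Rightarrow> nat) \<Rightarrow> (nat \<Rightarrow> (nat \<times> nat) set) \<Rightarrow> (nat \<Rightarrow> (nat \<times> nat) set)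
     \<Rightarrow> nat \<Rightarrow> nat \<Rightarrow> bool" where
  "blocking n \<mu> PW PM w m \<longleftrightarrow>
     (m, \<mu> w) \<in> PW w \<and> (w, inv_into {..<n} \<mu> m) \<in> PM m"

definition num_blocking ::
  "nat \<Rightarrow> (nat \<Rightarrow> nat) \<Rightarrow> (nat \<Rightarrow> (nat \<times> nat) set) \<Rightarrow> (nat \<Rightarrow> (nat \<times> nat) set) \<Rightarrow> nat" where
  "num_blocking n \<mu> PW PM =
     card {(w, m). w < n \<and> m < n \<and> blocking n \<mu> PW PM w m}"

end

theory Submission imports Defs "HOL-Library.Nat_Bijection" "HOL-Probability.Hoeffding" begin

fun sendA :: "nat \<Rightarrow> ('a \<Rightarrow> nat) \<Rightarrow> nat \<Rightarrow> (nat \<Rightarrow> ('a,'b) ptree) \<Rightarrow> ('a,'b) ptree" where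
  "sendA 0 g acc cont = cont acc"
| "sendA (Suc L) g acc cont =
     ANode (\<lambda>a. g a div 2^L mod 2 = 1) (sendA L g (acc + 2^L) cont) (sendA L g acc cont)"

lemma exec_sendA: "exec (sendA L g acc cont) x y = exec (cont (acc + g x mod 2^L)) x y"
proof (induction L arbitrary: acc)
  case 0 then show ?case by simp
next
  case (Suc L)
  have e: "g x mod 2^Suc L = 2^L * (g x div 2^L mod 2) + g x mod 2^L"
    using mod_mult2_eq[of "g x" "2^L" 2] by (simp add: mult.commute)
  show ?case
  proof (cases "g x div 2^L mod 2 = 1")
    case True then show ?thesis using Suc e by (simp add: add.assoc)
  next
    case False then have "g x div 2^L mod 2 = 0" by presburger
    then show ?thesis using Suc e False by simp
  qed
qed

lemma depth_sendA: "(\<And>v. depth (cont v) \<le> D) \<Longrightarrow> depth (sendA L g acc cont) \<le> L + D"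
  by (induction L arbitrary: acc) (auto simp: max_def)

fun prot :: "('a \<Rightarrow> nat \<Rightarrow> nat) \<Rightarrow> ('b \<Rightarrow> nat \<Rightarrow> bool) \<Rightarrow> nat \<Rightarrow> real \<Rightarrow> nat \<Rightarrow> nat \<Rightarrow> ('a,'b) ptree" where
  "prot code bob L t 0 cnt = Out (real cnt \<ge> t)"
| "prot code bob L t (Suc r) cnt =
     sendA L (\<lambda>a. code a r) 0 (\<lambda>v. BNode (\<lambda>b. bob b v) (prot code bob L t r (Suc cnt)) (prot code bob L t r cnt))"

lemma depth_prot: "depth (prot code bob L t r cnt) \<le> r * (L + 1)"
proof (induction r arbitrary: cnt)
  case 0 then show ?case by simp
next
  case (Suc r)
  have "depth (prot code bob L t (Suc r) cnt) \<le> L + (r * (L+1) + 1)"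
    unfolding prot.simps by (rule depth_sendA) (use Suc in auto)
  then show ?case by simp
qed

lemma card_lessSuc: "card {i. i < Suc r \<and> P i} = card {i. i < r \<and> P i} + (if P r then 1 else 0)"
proof -
  have "{i. i < Suc r \<and> P i} = (if P r then insert r {i. i < r \<and> P i} else {i. i < r \<and> P i})"
    by (auto simp: less_Suc_eq)
  then show ?thesis by auto
qed

lemma exec_prot:
  assumes "\<And>i. i < r \<Longrightarrow> code x i < 2^L \<and> bob y (code x i) = P i"
  shows "exec (prot code bob L t r cnt) x y = (real (cnt + card {i. i < r \<and> P i}) \<ge> t)"
  using assms
proof (induction r arbitrary: cnt)
  case 0 then show ?case by simp
next
  case (Suc r)
  have h: "code x r < 2^L" "bob y (code x r) = P r" using Suc.prems by auto
  have IH: "\<And>c. exec (prot code bob L t r c) x y = (real (c + card {i. i < r \<and> P i}) \<ge> t)"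
    using Suc by auto
  show ?case using h by (simp add: exec_sendA IH card_lessSuc algebra_simps)
qed


lemma sample_binomial:
  fixes S :: "'x set" and g :: "'x \<Rightarrow> bool"
  assumes S: "finite S" "S \<noteq> {}"
  defines "p \<equiv> real (card {x\<in>S. g x}) / real (card S)"
  shows "measure_pmf.prob (Pi_pmf {..<k} d (\<lambda>_. pmf_of_set S)) {f. Q (card {i. i < k \<and> g (f i)})}
         = measure_pmf.prob (binomial_pmf k p) {x. Q x}"
proof -
  have p01: "p \<in> {0..1}" unfolding p_def using S
    by (auto simp: divide_le_eq_1 card_gt_0_iff intro!: card_mono)
  have bern: "map_pmf g (pmf_of_set S) = bernoulli_pmf p"
  proof (rule pmf_eqI)
    fix b :: bool
    have T: "pmf (map_pmf g (pmf_of_set S)) True = p"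
      unfolding pmf_map using S by (simp add: measure_pmf_of_set p_def Int_def vimage_def)
    show "pmf (map_pmf g (pmf_of_set S)) b = pmf (bernoulli_pmf p) b"
      using p01 T by (cases b) (auto simp: pmf_False_conv_True[of "map_pmf g (pmf_of_set S)"])
  qed
  have "map_pmf (\<lambda>f. card {i. i < k \<and> g (f i)}) (Pi_pmf {..<k} d (\<lambda>_. pmf_of_set S))
        = map_pmf (\<lambda>h. card {i\<in>{..<k}. h i}) (map_pmf (\<lambda>f. g \<circ> f) (Pi_pmf {..<k} d (\<lambda>_. pmf_of_set S)))"
    by (simp add: pmf.map_comp o_def)
  also have "map_pmf (\<lambda>f. g \<circ> f) (Pi_pmf {..<k} d (\<lambda>_. pmf_of_set S))
        = Pi_pmf {..<k} (g d) (\<lambda>_. map_pmf g (pmf_of_set S))"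
    by (rule Pi_pmf_map[symmetric]) auto
  also have "map_pmf (\<lambda>h. card {i\<in>{..<k}. h i}) (Pi_pmf {..<k} (g d) (\<lambda>_. map_pmf g (pmf_of_set S)))
        = binomial_pmf k p"
    unfolding bern by (rule binomial_pmf_altdef'[symmetric]) (use p01 in auto)
  finally have eq: "map_pmf (\<lambda>f. card {i. i < k \<and> g (f i)}) (Pi_pmf {..<k} d (\<lambda>_. pmf_of_set S)) = binomial_pmf k p" .
  show ?thesis
    by (subst eq[symmetric]) (simp add: vimage_def)
qed

lemma exp_small: assumes "x \<ge> (2::real)" shows "exp (-x) \<le> 1/3"
proof -
  have e1: "exp (1::real) \<ge> 2" using exp_ge_add_one_self[of "1::real"] by simp
  have "exp (2::real) = exp 1 * exp 1" using exp_add[of "1::real" 1] by simp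
  then have "exp (2::real) \<ge> 4" using e1 mult_mono[OF e1 e1] by simp
  then have "exp x \<ge> 3" using assms by (smt (verit) exp_le_cancel_iff)
  then show ?thesis by (simp add: exp_minus divide_simps)
qed

lemma tails:
  fixes k :: nat and p \<epsilon> \<delta> :: real
  assumes k: "k > 0" and p: "p \<in> {0..1}" and d: "\<delta> > 0" and kd: "real k * \<delta>^2 \<ge> 4"
  defines "t \<equiv> real k * (\<epsilon> - \<delta>/2)"
  shows "p \<ge> \<epsilon> \<Longrightarrow> measure_pmf.prob (binomial_pmf k p) {x. t \<le> real x} \<ge> 2/3"
    and "p \<le> \<epsilon> - \<delta> \<Longrightarrow> measure_pmf.prob (binomial_pmf k p) {x. t \<le> real x} \<le> 1/3"
proof -
  have bd: "binomial_distribution p" using p by unfold_locales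
  have e: "exp (real_of_int (- 2 * int k) * (\<delta>/2)\<^sup>2) \<le> 1/3"
  proof -
    have eq: "real_of_int (- 2 * int k) * (\<delta>/2)\<^sup>2 = - (real k * \<delta>^2 / 2)"
      by (simp add: power2_eq_square)
    have "real k * \<delta>^2 / 2 \<ge> 2" using kd by simp
    then show ?thesis unfolding eq by (rule exp_small)
  qed
  have kr: "real k > 0" using k by simp
  {
    assume pe: "p \<ge> \<epsilon>"
    have sub: "{x. \<not> t \<le> real x} \<subseteq> {x. real x / real k \<le> p - \<delta>/2}"
    proof
      fix x assume "x \<in> {x. \<not> t \<le> real x}"
      then have "real x < real k * (\<epsilon> - \<delta>/2)" unfolding t_def by simp
      then have "real x / real k < \<epsilon> - \<delta>/2" using kr by (simp add: divide_simps mult.commute)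
      then show "x \<in> {x. real x / real k \<le> p - \<delta>/2}" using pe by simp
    qed
    have b: "measure_pmf.prob (binomial_pmf k p) {x. real x / real k \<le> p - \<delta>/2} \<le> exp (real_of_int (- 2 * int k) * (\<delta>/2)\<^sup>2)"
      by (rule binomial_distribution.prob_le'[OF bd k]) (use d in simp)
    have a: "measure_pmf.prob (binomial_pmf k p) {x. \<not> t \<le> real x} \<le> measure_pmf.prob (binomial_pmf k p) {x. real x / real k \<le> p - \<delta>/2}"
      by (rule measure_pmf.finite_measure_mono[OF sub]) simp
    have "measure_pmf.prob (binomial_pmf k p) {x. \<not> t \<le> real x} \<le> 1/3"
      using a b e by linarith
    moreover have "measure_pmf.prob (binomial_pmf k p) {x. t \<le> real x}
        = 1 - measure_pmf.prob (binomial_pmf k p) {x. \<not> t \<le> real x}"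
      using measure_pmf.prob_compl[of "{x. t \<le> real x}" "binomial_pmf k p"]
      by (simp add: Compl_eq_Diff_UNIV[symmetric] Collect_neg_eq)
    ultimately show "measure_pmf.prob (binomial_pmf k p) {x. t \<le> real x} \<ge> 2/3" by simp
  }
  {
    assume pe: "p \<le> \<epsilon> - \<delta>"
    have sub: "{x. t \<le> real x} \<subseteq> {x. p + \<delta>/2 \<le> real x / real k}"
    proof
      fix x assume "x \<in> {x. t \<le> real x}"
      then have "real k * (\<epsilon> - \<delta>/2) \<le> real x" unfolding t_def by simp
      then have "\<epsilon> - \<delta>/2 \<le> real x / real k" using kr by (simp add: divide_simps mult.commute)
      then show "x \<in> {x. p + \<delta>/2 \<le> real x / real k}" using pe by simp
    qed
    have b: "measure_pmf.prob (binomial_pmf k p) {x. p + \<delta>/2 \<le> real x / real k} \<le> exp (real_of_int (- 2 * int k) * (\<delta>/2)\<^sup>2)"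
      by (rule binomial_distribution.prob_ge'[OF bd k]) (use d in simp)
    have a: "measure_pmf.prob (binomial_pmf k p) {x. t \<le> real x} \<le> measure_pmf.prob (binomial_pmf k p) {x. p + \<delta>/2 \<le> real x / real k}"
      by (rule measure_pmf.finite_measure_mono[OF sub]) simp
    show "measure_pmf.prob (binomial_pmf k p) {x. t \<le> real x} \<le> 1/3"
      using a b e by linarith
  }
qed

lemma code_arith:
  fixes w m n :: nat and b :: bool
  assumes "w < n" "m < n"
  defines "v \<equiv> 2*(w*n+m) + (if b then 1 else 0)"
  shows "(v mod 2 = 1) = b" "v div 2 div n = w" "v div 2 mod n = m" "v < 2*n*n"
proof -
  have "v div 2 = w*n+m" unfolding v_def by auto
  then show "v div 2 div n = w" "v div 2 mod n = m" using assms by auto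
  show "(v mod 2 = 1) = b" unfolding v_def by auto
  have "w*n+m < n*n"
  proof -
    have "w*n + m < w*n + n" using assms by simp
    also have "\<dots> = (w+1)*n" by simp
    also have "\<dots> \<le> n*n" using assms by (intro mult_right_mono) auto
    finally show ?thesis .
  qed
  then show "v < 2*n*n" unfolding v_def by auto
qed

lemma pow_ceil_log:
  assumes "n \<ge> (1::nat)"
  shows "n \<le> 2 ^ nat \<lceil>log 2 (real n)\<rceil>" "real (nat \<lceil>log 2 (real n)\<rceil>) \<le> log 2 (real n) + 1"
proof -
  have l0: "log 2 (real n) \<ge> 0" using assms by simp
  have cz: "\<lceil>log 2 (real n)\<rceil> \<ge> 0" using l0 by simp
  have ce: "real (nat \<lceil>log 2 (real n)\<rceil>) = of_int \<lceil>log 2 (real n)\<rceil>" using cz by simp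
  have c: "real (nat \<lceil>log 2 (real n)\<rceil>) \<ge> log 2 (real n)" unfolding ce by (rule le_of_int_ceiling)
  have "real n = 2 powr log 2 (real n)" using assms by simp
  also have "\<dots> \<le> 2 powr real (nat \<lceil>log 2 (real n)\<rceil>)" using c by (intro powr_mono) auto
  also have "\<dots> = real (2 ^ nat \<lceil>log 2 (real n)\<rceil>)" by (simp add: powr_realpow)
  finally show "n \<le> 2 ^ nat \<lceil>log 2 (real n)\<rceil>" by linarith
  show "real (nat \<lceil>log 2 (real n)\<rceil>) \<le> log 2 (real n) + 1" unfolding ce
    using of_int_ceiling_le_add_one[of "log 2 (real n)"] by simp
qed

theorem theorem19:
  fixes \<epsilon> \<delta> :: real
  assumes "\<delta> > 0" and "\<epsilon> \<ge> \<delta>"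
  shows "\<exists>C::real. \<forall>n::nat. n \<ge> 2 \<longrightarrow> (\<forall>\<mu>. perfect_marriage n \<mu> \<longrightarrow>
     (\<exists>(T :: ((nat \<Rightarrow> (nat \<times> nat) set) \<times> nat, (nat \<Rightarrow> (nat \<times> nat) set) \<times> nat) ptree)
        (ca :: nat pmf) (cb :: nat pmf).
        real (depth T) \<le> C * log 2 (real n) \<and>
        (\<forall>PW PM. pref_profile n PW \<longrightarrow> pref_profile n PM \<longrightarrow>
           (real (num_blocking n \<mu> PW PM) \<ge> \<epsilon> * real n ^ 2 \<longrightarrow>
              accept_prob T ca cb PW PM \<ge> 2/3) \<and>
           (real (num_blocking n \<mu> PW PM) \<le> (\<epsilon> - \<delta>) * real n ^ 2 \<longrightarrow>
              1 - accept_prob T ca cb PW PM \<ge> 2/3))))"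
proof -
  define k where "k = nat \<lceil>4 / \<delta>^2\<rceil>"
  have kd: "real k * \<delta>^2 \<ge> 4"
  proof -
    have "real k \<ge> 4 / \<delta>^2" unfolding k_def by linarith
    then show ?thesis using assms(1) by (simp add: divide_simps)
  qed
  have k0: "k > 0" using kd by (cases k) auto
  show ?thesis
  proof (intro exI[of _ "6 * real k"] allI impI)
    fix n :: nat and \<mu> assume n2: "n \<ge> 2" and pm: "perfect_marriage n \<mu>"
    define c where "c = nat \<lceil>log 2 (real n)\<rceil>"
    define L where "L = 2*c+1"
    define clamp where "clamp = (\<lambda>x::nat\<times>nat. (fst x mod n, snd x mod n))"
    define dec where "dec = (\<lambda>ra i. clamp (prod_decode (list_decode ra ! i)))"
    define enc where "enc = (\<lambda>f::nat\<Rightarrow>nat\<times>nat. list_encode (map (\<lambda>i. prod_encode (f i)) [0..<k]))"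
    define code where "code = (\<lambda>(a::(nat \<Rightarrow> (nat \<times> nat) set) \<times> nat) i. let x = dec (snd a) i in
        2*(fst x * n + snd x) + (if (snd x, \<mu> (fst x)) \<in> fst a (fst x) then 1 else (0::nat)))"
    define bob where "bob = (\<lambda>(b::(nat \<Rightarrow> (nat \<times> nat) set) \<times> nat) (v::nat). v mod 2 = 1 \<and>
        (v div 2 div n, inv_into {..<n} \<mu> (v div 2 mod n)) \<in> fst b (v div 2 mod n))"
    define t where "t = real k * (\<epsilon> - \<delta>/2)"
    define T where "T = prot code bob L t k 0"
    define S where "S = {..<n} \<times> {..<n}"
    define F where "F = Pi_pmf {..<k} (0,0) (\<lambda>_. pmf_of_set S)"
    define ca where "ca = map_pmf enc F"
    define cb where "cb = (return_pmf 0 :: nat pmf)"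
    have n1: "n \<ge> 1" using n2 by simp
    have npos: "n > 0" using n2 by simp
    have cl: "n \<le> 2^c" "real c \<le> log 2 (real n) + 1" using pow_ceil_log[OF n1] unfolding c_def by auto
    have lg1: "log 2 (real n) \<ge> 1" using n2 by simp
    have "2*n*n \<le> 2*(2^c*2^c)" using mult_le_mono[OF cl(1) cl(1)] by simp
    also have "\<dots> = 2^L" unfolding L_def by (simp add: power_add[symmetric] mult_2[symmetric] power_mult)
    finally have nL: "2*n*n \<le> 2^L" .
    have depthT: "real (depth T) \<le> 6 * real k * log 2 (real n)"
    proof -
      have "depth T \<le> k * (L+1)" unfolding T_def by (rule depth_prot)
      then have "real (depth T) \<le> real k * (2 * real c + 2)" unfolding L_def
        by (metis (mono_tags, lifting) of_nat_le_iff of_nat_mult of_nat_add of_nat_numeral of_nat_1 add.assoc one_add_one)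
      also have "\<dots> \<le> real k * (2 * log 2 (real n) + 4)" using cl(2) by (intro mult_left_mono) auto
      also have "\<dots> \<le> real k * (6 * log 2 (real n))" using lg1 by (intro mult_left_mono) auto
      finally show ?thesis by simp
    qed
    define g0 where "g0 = (\<lambda>PW PM (x::nat\<times>nat). blocking n \<mu> PW PM (fst x) (snd x))"
    have exT: "exec T (PW, ra) (PM, rb) = (t \<le> real (card {i. i < k \<and> g0 PW PM (dec ra i)}))" for PW PM ra rb
    proof -
      have "exec T (PW, ra) (PM, rb) = (t \<le> real (0 + card {i. i < k \<and> g0 PW PM (dec ra i)}))"
        unfolding T_def
      proof (rule exec_prot)
        fix i
        obtain w m where wm: "dec ra i = (w, m)" by fastforce
        have wmn: "w < n" "m < n" using wm npos unfolding dec_def clamp_def by auto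
        note ca = code_arith[OF wmn, of "(m, \<mu> w) \<in> PW w"]
        have cd: "code (PW, ra) i = 2*(w*n+m) + (if (m, \<mu> w) \<in> PW w then 1 else 0)"
          unfolding code_def using wm by simp
        show "code (PW, ra) i < 2^L \<and> bob (PM, rb) (code (PW, ra) i) = g0 PW PM (dec ra i)"
          using ca nL unfolding cd bob_def g0_def wm blocking_def by auto
      qed
      then show ?thesis by simp
    qed
    define g where "g = (\<lambda>PW PM. g0 PW PM \<circ> clamp)"
    have finS: "finite S" "S \<noteq> {}" unfolding S_def using npos by auto
    have cardS: "card S = n*n" unfolding S_def by simp
    have decenc: "dec (enc f) i = clamp (f i)" if "i < k" for f i
      unfolding dec_def enc_def using that by simp
    have acc: "accept_prob T ca cb PW PM =
      measure_pmf.prob (binomial_pmf k (real (card {x\<in>S. g PW PM x}) / real (card S))) {x. t \<le> real x}"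
      for PW PM
    proof -
      have "accept_prob T ca cb PW PM =
         measure_pmf.prob (pair_pmf ca cb) ({ra. t \<le> real (card {i. i < k \<and> g0 PW PM (dec ra i)})} \<times> UNIV)"
        unfolding accept_prob_def exT by (intro arg_cong[where f="measure_pmf.prob _"]) auto
      also have "\<dots> = measure_pmf.prob ca {ra. t \<le> real (card {i. i < k \<and> g0 PW PM (dec ra i)})}"
        by (subst measure_pmf_prob_product) (auto simp: cb_def)
      also have "\<dots> = measure_pmf.prob F {f. t \<le> real (card {i. i < k \<and> g0 PW PM (dec (enc f) i)})}"
        unfolding ca_def by (simp add: vimage_def)
      also have "{f. t \<le> real (card {i. i < k \<and> g0 PW PM (dec (enc f) i)})}
          = {f. t \<le> real (card {i. i < k \<and> g PW PM (f i)})}"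
      proof -
        have "{i. i < k \<and> g0 PW PM (dec (enc f) i)} = {i. i < k \<and> g PW PM (f i)}" for f
          using decenc unfolding g_def by auto
        then show ?thesis by simp
      qed
      also have "measure_pmf.prob F \<dots> =
         measure_pmf.prob (binomial_pmf k (real (card {x\<in>S. g PW PM x}) / real (card S))) {x. t \<le> real x}"
        unfolding F_def by (rule sample_binomial[OF finS])
      finally show ?thesis .
    qed
    have cardB: "card {x\<in>S. g PW PM x} = num_blocking n \<mu> PW PM" for PW PM
    proof -
      have "{x\<in>S. g PW PM x} = {(w, m). w < n \<and> m < n \<and> blocking n \<mu> PW PM w m}"
        unfolding S_def g_def g0_def clamp_def by auto
      then show ?thesis unfolding num_blocking_def by simp
    qed
    show "\<exists>T ca cb. real (depth T) \<le> 6 * real k * log 2 (real n) \<and>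
        (\<forall>PW PM. pref_profile n PW \<longrightarrow> pref_profile n PM \<longrightarrow>
           (real (num_blocking n \<mu> PW PM) \<ge> \<epsilon> * real n ^ 2 \<longrightarrow>
              accept_prob T ca cb PW PM \<ge> 2/3) \<and>
           (real (num_blocking n \<mu> PW PM) \<le> (\<epsilon> - \<delta>) * real n ^ 2 \<longrightarrow>
              1 - accept_prob T ca cb PW PM \<ge> 2/3))"
    proof (intro exI conjI allI impI)
      show "real (depth T) \<le> 6 * real k * log 2 (real n)" by (rule depthT)
    next
      fix PW PM
      define p where "p = real (card {x\<in>S. g PW PM x}) / real (card S)"
      have nn: "real n ^ 2 = real (card S)" unfolding cardS by (simp add: power2_eq_square)
      have nnp: "real (card S) > 0" using finS by (simp add: card_gt_0_iff)
      have p01: "p \<in> {0..1}" unfolding p_def using finS nnp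
        by (auto simp: divide_le_eq_1 intro!: card_mono)
      have pB: "p = real (num_blocking n \<mu> PW PM) / real n ^ 2" unfolding p_def nn cardB ..
      note tl = tails[OF k0 p01 assms(1) kd, of \<epsilon>, folded t_def]
      {
        assume "real (num_blocking n \<mu> PW PM) \<ge> \<epsilon> * real n ^ 2"
        moreover have "real n ^ 2 > 0" using npos by simp
        ultimately have "p \<ge> \<epsilon>" unfolding pB by (simp add: le_divide_eq)
        then show "accept_prob T ca cb PW PM \<ge> 2/3" unfolding acc p_def[symmetric] by (rule tl(1))
      next
        assume "real (num_blocking n \<mu> PW PM) \<le> (\<epsilon> - \<delta>) * real n ^ 2"
        moreover have "real n ^ 2 > 0" using npos by simp
        ultimately have "p \<le> \<epsilon> - \<delta>" unfolding pB by (simp add: divide_le_eq)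
        then have "accept_prob T ca cb PW PM \<le> 1/3" unfolding acc p_def[symmetric] by (rule tl(2))
        then show "1 - accept_prob T ca cb PW PM \<ge> 2/3" by simp
      }
    qed
  qed
qed

end
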